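(* A Cantor set (with any compatible metric) admits a continuous selfmap which is generically chaotic but not generically $\varepsilon$-chaotic for any $\varepsilon>0$.
   Context: For continuous $f$ on a compact metric space $(X,d)$: $(x,y)$ is a Li-Yorke pair if $\liminf_n d(f^n(x),f^n(y))=0<\limsup_n d(f^n(x),f^n(y))$, and an $\varepsilon$-scrambled pair if $\liminf_n d(f^n(x),f^n(y))=0$ and $\limsup_n d(f^n(x),f^n(y))>\varepsilon$; $f$ is generically chaotic (resp. generically $\varepsilon$-chaotic) if the set of Li-Yorke (resp. $\varepsilon$-scrambled) pairs is residual in $X^2$. *)

theory Defs
  imports "HOL-Analysis.Analysis" "HOL-Library.Liminf_Limsup"
begin

fun cantor_level :: "nat \<Rightarrow> real set" where
  "cantor_level 0 = {0..1}"
| "cantor_level (Suc n) = (\<lambda>x. x / 3) ` cantor_level n \<union> (\<lambda>x. x / 3 + 2 / 3) ` cantor_level n"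

definition cantor_set :: "real set" where
  "cantor_set = (\<Inter>n. cantor_level n)"

definition residual_in :: "'a::topological_space set \<Rightarrow> 'a set \<Rightarrow> bool" where
  "residual_in S A \<longleftrightarrow> A \<subseteq> S \<and>
     (\<exists>G :: nat \<Rightarrow> 'a set. (\<forall>n. openin (top_of_set S) (G n) \<and> S \<subseteq> closure (G n))
        \<and> S \<inter> (\<Inter>n. G n) \<subseteq> A)"

definition orbit_dist :: "('a::metric_space \<Rightarrow> 'a) \<Rightarrow> 'a \<Rightarrow> 'a \<Rightarrow> nat \<Rightarrow> ereal" where
  "orbit_dist f x y = (\<lambda>n. ereal (dist ((f ^^ n) x) ((f ^^ n) y)))"

definition li_yorke_pair :: "('a::metric_space \<Rightarrow> 'a) \<Rightarrow> 'a \<Rightarrow> 'a \<Rightarrow> bool" where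
  "li_yorke_pair f x y \<longleftrightarrow>
     liminf (orbit_dist f x y) = 0 \<and> 0 < limsup (orbit_dist f x y)"

definition eps_scrambled_pair :: "('a::metric_space \<Rightarrow> 'a) \<Rightarrow> real \<Rightarrow> 'a \<Rightarrow> 'a \<Rightarrow> bool" where
  "eps_scrambled_pair f \<epsilon> x y \<longleftrightarrow>
     liminf (orbit_dist f x y) = 0 \<and> ereal \<epsilon> < limsup (orbit_dist f x y)"

definition generically_chaotic :: "'a::metric_space set \<Rightarrow> ('a \<Rightarrow> 'a) \<Rightarrow> bool" where
  "generically_chaotic X f \<longleftrightarrow>
     residual_in (X \<times> X) {(x, y) \<in> X \<times> X. li_yorke_pair f x y}"

definition generically_eps_chaotic :: "'a::metric_space set \<Rightarrow> ('a \<Rightarrow> 'a) \<Rightarrow> real \<Rightarrow> bool" where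
  "generically_eps_chaotic X f \<epsilon> \<longleftrightarrow>
     residual_in (X \<times> X) {(x, y) \<in> X \<times> X. eps_scrambled_pair f \<epsilon> x y}"

end

theory Submission
  imports Defs "HOL-Library.Nat_Bijection"
begin


definition tdig :: "(nat \<Rightarrow> bool) \<Rightarrow> nat \<Rightarrow> real" where
  "tdig a n = (if a n then 2 else 0) / 3 ^ Suc n"

definition phi :: "(nat \<Rightarrow> bool) \<Rightarrow> real" where
  "phi a = (\<Sum>n. tdig a n)"

definition sh :: "nat \<Rightarrow> (nat \<Rightarrow> bool) \<Rightarrow> nat \<Rightarrow> bool" where
  "sh n a = (\<lambda>i. a (i + n))"

definition agree :: "(nat \<Rightarrow> bool) \<Rightarrow> (nat \<Rightarrow> bool) \<Rightarrow> nat \<Rightarrow> bool" where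
  "agree a b n \<longleftrightarrow> (\<forall>i<n. a i = b i)"

lemma tdig_nonneg: "0 \<le> tdig a n" by (simp add: tdig_def)
lemma tdig_le: "tdig a n \<le> 2 * (1/3) ^ Suc n"
  by (simp add: tdig_def power_divide)

lemma geo_sums: "(\<lambda>n. 2 * (1/3::real) ^ Suc n) sums 1"
proof -
  have "(\<lambda>n. (1/3::real) ^ n) sums (1 / (1 - 1/3))" by (rule geometric_sums) simp
  then have "(\<lambda>n. (2/3) * (1/3::real) ^ n) sums ((2/3) * (1 / (1 - 1/3)))" by (rule sums_mult)
  then show ?thesis by (simp add: power_Suc)
qed

lemma summable_tdig: "summable (tdig a)"
  apply (rule summable_comparison_test[of _ "\<lambda>n. 2 * (1/3::real) ^ Suc n"])
  using tdig_nonneg tdig_le geo_sums sums_summable by fastforce+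

lemma phi_nonneg: "0 \<le> phi a"
  unfolding phi_def by (simp add: summable_tdig suminf_nonneg tdig_nonneg)

lemma phi_le1: "phi a \<le> 1"
proof -
  have "phi a \<le> (\<Sum>n. 2 * (1/3::real) ^ Suc n)"
    unfolding phi_def
    by (rule suminf_le) (use tdig_le summable_tdig geo_sums sums_summable in auto)
  also have "\<dots> = 1" using geo_sums sums_unique by metis
  finally show ?thesis .
qed

lemma phi_split: "phi a = (if a 0 then 2/3 else 0) + phi (sh 1 a) / 3"
proof -
  have "phi a = tdig a 0 + (\<Sum>n. tdig a (Suc n))"
    unfolding phi_def using suminf_split_head[OF summable_tdig[of a]] by simp
  moreover have "(\<lambda>n. tdig a (Suc n)) = (\<lambda>n. tdig (sh 1 a) n / 3)"
    by (auto simp: tdig_def sh_def)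
  moreover have "(\<Sum>n. tdig (sh 1 a) n / 3) = phi (sh 1 a) / 3"
    unfolding phi_def by (rule suminf_divide) (rule summable_tdig)
  ultimately show ?thesis by (simp add: tdig_def)
qed

lemma sh_sh: "sh 1 (sh n a) = sh (Suc n) a"
  by (auto simp: sh_def)

lemma phi_splitn: "phi a = (\<Sum>i<n. tdig a i) + phi (sh n a) / 3 ^ n"
proof (induction n)
  case 0 then show ?case by (simp add: sh_def)
next
  case (Suc n)
  have "phi (sh n a) = (if a n then 2/3 else 0) + phi (sh (Suc n) a) / 3"
    using phi_split[of "sh n a"] by (simp add: sh_def sh_sh[symmetric])
  have t: "tdig a n = (if a n then 2/3 else 0) / 3 ^ n" by (simp add: tdig_def)
  have "phi a = (\<Sum>i<n. tdig a i) + ((if a n then 2/3 else 0) + phi (sh (Suc n) a) / 3) / 3 ^ n"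
    using Suc \<open>phi (sh n a) = _\<close> by simp
  also have "\<dots> = (\<Sum>i<n. tdig a i) + tdig a n + phi (sh (Suc n) a) / 3 ^ Suc n"
    unfolding t by (simp add: add_divide_distrib)
  finally show ?case by simp
qed

lemma agree_sum: "agree a b n \<Longrightarrow> (\<Sum>i<n. tdig a i) = (\<Sum>i<n. tdig b i)"
  by (rule sum.cong) (auto simp: agree_def tdig_def)

lemma phi_agree_le: "agree a b n \<Longrightarrow> \<bar>phi a - phi b\<bar> \<le> 1 / 3 ^ n"
proof -
  assume ag: "agree a b n"
  have "phi a - phi b = (phi (sh n a) - phi (sh n b)) / 3 ^ n"
    using phi_splitn[of a n] phi_splitn[of b n] agree_sum[OF ag] by (simp add: diff_divide_distrib)
  moreover have "\<bar>phi (sh n a) - phi (sh n b)\<bar> \<le> 1"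
    using phi_nonneg[of "sh n a"] phi_le1[of "sh n a"] phi_nonneg[of "sh n b"] phi_le1[of "sh n b"]
    by linarith
  ultimately have "\<bar>phi a - phi b\<bar> = \<bar>phi (sh n a) - phi (sh n b)\<bar> / 3 ^ n"
    by (simp add: abs_divide)
  also have "\<dots> \<le> 1 / 3 ^ n" by (rule divide_right_mono) (use \<open>_ \<le> 1\<close> in auto)
  finally show ?thesis .
qed

lemma phi_agree_ge: "agree a b n \<Longrightarrow> a n \<noteq> b n \<Longrightarrow> 1 / 3 ^ Suc n \<le> \<bar>phi a - phi b\<bar>"
proof -
  assume ag: "agree a b n" and ne: "a n \<noteq> b n"
  have eq: "phi a - phi b = (phi (sh n a) - phi (sh n b)) / 3 ^ n"
    using phi_splitn[of a n] phi_splitn[of b n] agree_sum[OF ag] by (simp add: diff_divide_distrib)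
  have sa: "phi (sh n a) = (if a n then 2/3 else 0) + phi (sh 1 (sh n a)) / 3"
    using phi_split[of "sh n a"] by (simp add: sh_def)
  have sb: "phi (sh n b) = (if b n then 2/3 else 0) + phi (sh 1 (sh n b)) / 3"
    using phi_split[of "sh n b"] by (simp add: sh_def)
  have "1/3 \<le> \<bar>phi (sh n a) - phi (sh n b)\<bar>"
    using sa sb ne phi_nonneg[of "sh 1 (sh n a)"] phi_le1[of "sh 1 (sh n a)"]
      phi_nonneg[of "sh 1 (sh n b)"] phi_le1[of "sh 1 (sh n b)"]
    by (cases "a n") auto
  then have "(1/3) / 3 ^ n \<le> \<bar>phi (sh n a) - phi (sh n b)\<bar> / 3 ^ n"
    by (rule divide_right_mono) simp
  moreover have "(1/3) / 3 ^ n = 1 / (3::real) ^ Suc n" by simp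
  moreover have "\<bar>phi a - phi b\<bar> = \<bar>phi (sh n a) - phi (sh n b)\<bar> / 3 ^ n"
    using eq by (simp add: abs_divide)
  ultimately show ?thesis by simp
qed

lemma first_diff: "\<not> agree a b m \<Longrightarrow> \<exists>i<m. agree a b i \<and> a i \<noteq> b i"
proof -
  assume "\<not> agree a b m"
  then obtain i where i: "i < m" "a i \<noteq> b i" by (auto simp: agree_def)
  define j where "j = (LEAST j. a j \<noteq> b j)"
  have "a j \<noteq> b j" unfolding j_def by (rule LeastI[of _ i]) (rule i(2))
  moreover have "j \<le> i" unfolding j_def by (rule Least_le) (rule i(2))
  moreover have "agree a b j" unfolding agree_def j_def using not_less_Least by blast
  ultimately show ?thesis using i by (intro exI[of _ j]) auto
qed

lemma phi_inj: "phi a = phi b \<Longrightarrow> a = b"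
proof (rule ccontr)
  assume eq: "phi a = phi b" and "a \<noteq> b"
  then obtain i where "a i \<noteq> b i" by auto
  then have "\<not> agree a b (Suc i)" by (auto simp: agree_def)
  then obtain j where "agree a b j" "a j \<noteq> b j" using first_diff by blast
  from phi_agree_ge[OF this] eq have "1 / (3::real) ^ Suc j \<le> 0" by simp
  moreover have "0 < 1 / (3::real) ^ Suc j" by simp
  ultimately show False by linarith
qed

lemma phi_zero: "phi (\<lambda>i. False) = 0"
  by (simp add: phi_def tdig_def)

lemma phi_first_one:
  assumes "\<forall>i<N. \<not> w i" "w N"
  shows "2 / 3 ^ Suc N \<le> phi w" "phi w \<le> 1 / 3 ^ N"
proof -
  have ag: "agree w (\<lambda>i. False) N" using assms by (auto simp: agree_def)
  have "phi w = phi (sh N w) / 3 ^ N"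
    using phi_splitn[of w N] agree_sum[OF ag] by (simp add: tdig_def)
  moreover have "phi (sh N w) = 2/3 + phi (sh 1 (sh N w)) / 3"
    using phi_split[of "sh N w"] assms by (simp add: sh_def)
  ultimately have e: "phi w = (2/3 + phi (sh 1 (sh N w)) / 3) / 3 ^ N" by simp
  show "2 / 3 ^ Suc N \<le> phi w" unfolding e
    using phi_nonneg[of "sh 1 (sh N w)"] by (simp add: divide_right_mono field_simps)
  show "phi w \<le> 1 / 3 ^ N" unfolding e
    using phi_le1[of "sh 1 (sh N w)"] by (simp add: divide_right_mono field_simps)
qed




lemma level_sub01: "cantor_level n \<subseteq> {0..1}"
  by (induction n) auto

lemma compact_level: "compact (cantor_level n)"
proof (induction n)
  case 0 then show ?case by simp
next
  case (Suc n)
  have c1: "compact ((\<lambda>x. x / 3) ` cantor_level n)"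
    by (rule compact_continuous_image) (auto intro!: continuous_intros Suc)
  have c2: "compact ((\<lambda>x. x / 3 + 2/3) ` cantor_level n)"
    by (rule compact_continuous_image) (auto intro!: continuous_intros Suc)
  show ?case using compact_Un[OF c1 c2] by simp
qed

lemma cantor_sub01: "cantor_set \<subseteq> {0..1}"
  unfolding cantor_set_def using level_sub01[of 0] by (meson INF_lower UNIV_I order_trans)

lemma compact_cantor: "compact cantor_set"
proof -
  have "closed cantor_set" unfolding cantor_set_def
    by (rule closed_INT) (simp add: compact_level compact_imp_closed)
  moreover have "bounded cantor_set" using cantor_sub01 bounded_subset bounded_closed_interval by blast
  ultimately show ?thesis using compact_eq_bounded_closed by blast
qed

lemma phi_level: "phi a \<in> cantor_level n"
proof (induction n arbitrary: a)
  case 0 then show ?case using phi_nonneg phi_le1 by simp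
next
  case (Suc n)
  have "phi (sh 1 a) \<in> cantor_level n" by (rule Suc)
  then show ?case using phi_split[of a] by (cases "a 0") auto
qed

lemma phi_cantor: "phi a \<in> cantor_set"
  unfolding cantor_set_def using phi_level by auto

definition tmap :: "real \<Rightarrow> real" where
  "tmap x = (if x \<le> 1/2 then 3 * x else 3 * x - 2)"

lemma tmap_cantor:
  assumes x: "x \<in> cantor_set"
  shows "tmap x \<in> cantor_set" "x = (if 1/2 < x then 2/3 else 0) + tmap x / 3"
proof -
  have "\<forall>n. tmap x \<in> cantor_level n"
  proof
    fix n
    have xs: "x \<in> cantor_level (Suc n)" using x unfolding cantor_set_def by blast
    have lv: "cantor_level n \<subseteq> {0..1}" by (rule level_sub01)
    from xs have "x \<in> (\<lambda>x. x / 3) ` cantor_level n \<or> x \<in> (\<lambda>x. x / 3 + 2 / 3) ` cantor_level n"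
      by simp
    then show "tmap x \<in> cantor_level n"
    proof
      assume "x \<in> (\<lambda>x. x / 3) ` cantor_level n"
      then obtain y where y: "y \<in> cantor_level n" "x = y / 3" by blast
      then have "y \<le> 1" using lv by (meson atLeastAtMost_iff subsetD)
      then have "x \<le> 1/2" using y by simp
      then have "tmap x = y" using y by (simp add: tmap_def)
      then show ?thesis using y(1) by (metis (no_types))
    next
      assume "x \<in> (\<lambda>x. x / 3 + 2 / 3) ` cantor_level n"
      then obtain y where y: "y \<in> cantor_level n" "x = y / 3 + 2/3" by blast
      then have "0 \<le> y" using lv by (meson atLeastAtMost_iff subsetD)
      then have "\<not> x \<le> 1/2" using y by simp
      then have "tmap x = y" using y by (simp add: tmap_def)
      then show ?thesis using y(1) by (metis (no_types))
    qed
  qed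
  then show "tmap x \<in> cantor_set" unfolding cantor_set_def by blast
  show "x = (if 1/2 < x then 2/3 else 0) + tmap x / 3" by (simp add: tmap_def field_simps)
qed

lemma small_pow3_aux: "(\<And>n. \<bar>d\<bar> \<le> 1 / (3::real) ^ n) \<Longrightarrow> d = 0"
proof (rule ccontr)
  assume h: "\<And>n. \<bar>d\<bar> \<le> 1 / (3::real) ^ n" and "d \<noteq> 0"
  then have "0 < \<bar>d\<bar>" by simp
  then obtain n where "(1/3::real) ^ n < \<bar>d\<bar>" using real_arch_pow_inv[of "\<bar>d\<bar>" "1/3"] by auto
  with h[of n] show False by (simp add: power_divide)
qed

lemma small_pow3: "(\<And>n. \<bar>a - b\<bar> \<le> 1 / (3::real) ^ n) \<Longrightarrow> a = b"
  using small_pow3_aux[of "a - b"] by simp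

lemma phi_surj:
  assumes x: "x \<in> cantor_set"
  shows "\<exists>a. phi a = x"
proof -
  define y where "y = (\<lambda>n. (tmap ^^ n) x)"
  have y0: "y 0 = x" by (simp add: y_def)
  have ys: "y (Suc n) = tmap (y n)" for n by (simp add: y_def)
  define a where "a n = (1/2 < y n)" for n
  have inC: "y n \<in> cantor_set" for n
  proof (induction n)
    case 0 then show ?case using x y0 by simp
  next
    case (Suc n) then show ?case using ys tmap_cantor(1) by metis
  qed
  have rep: "x = (\<Sum>i<n. tdig a i) + y n / 3 ^ n" for n
  proof (induction n)
    case 0 then show ?case using y0 by simp
  next
    case (Suc n)
    have e: "y n = (if a n then 2/3 else 0) + y (Suc n) / 3"
      using tmap_cantor(2)[OF inC[of n]] ys[of n] by (simp add: a_def)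
    have t: "tdig a n = (if a n then 2/3 else 0) / 3 ^ n" by (simp add: tdig_def)
    have "(\<Sum>i<n. tdig a i) + y n / 3 ^ n = (\<Sum>i<Suc n. tdig a i) + y (Suc n) / 3 ^ Suc n"
      by (subst e) (simp add: t add_divide_distrib)
    then show ?case using Suc.IH by linarith
  qed
  have "\<bar>phi a - x\<bar> \<le> 1 / 3 ^ n" for n
  proof -
    have "phi a - x = (phi (sh n a) - y n) / 3 ^ n"
      using phi_splitn[of a n] rep[of n] by (simp add: diff_divide_distrib)
    moreover have "\<bar>phi (sh n a) - y n\<bar> \<le> 1"
    proof -
      have "y n \<in> {0..1}" using inC[of n] cantor_sub01 by blast
      then show ?thesis using phi_nonneg[of "sh n a"] phi_le1[of "sh n a"] by (simp add: abs_le_iff)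
    qed
    ultimately have "\<bar>phi a - x\<bar> = \<bar>phi (sh n a) - y n\<bar> / 3 ^ n"
      by (simp add: abs_divide)
    also have "\<dots> \<le> 1 / 3 ^ n" by (rule divide_right_mono) (use \<open>_ \<le> 1\<close> in auto)
    finally show ?thesis .
  qed
  then have "phi a = x" using small_pow3 by blast
  then show ?thesis by blast
qed




definition fo :: "(nat \<Rightarrow> bool) \<Rightarrow> nat" where "fo w = (LEAST i. w i)"

definition enc :: "nat \<Rightarrow> (nat \<Rightarrow> bool) \<Rightarrow> nat \<Rightarrow> bool" where
  "enc k s = (if \<exists>i. s i then (\<lambda>i. prod_encode (k, fo s) \<le> i \<and> s (i - prod_encode (k, fo s) + fo s))
              else (\<lambda>i. False))"

definition lev :: "(nat \<Rightarrow> bool) \<Rightarrow> nat" where "lev w = fst (prod_decode (fo w))"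
definition dpos :: "(nat \<Rightarrow> bool) \<Rightarrow> nat" where "dpos w = snd (prod_decode (fo w))"
definition dec :: "(nat \<Rightarrow> bool) \<Rightarrow> nat \<Rightarrow> bool" where
  "dec w = (\<lambda>i. dpos w \<le> i \<and> w (i - dpos w + fo w))"

definition Gm :: "(nat \<Rightarrow> bool) \<Rightarrow> nat \<Rightarrow> bool" where
  "Gm w = (if \<exists>i. w i then enc (lev w) (sh 1 (dec w)) else (\<lambda>i. False))"

lemma fo_one: "\<exists>i. w i \<Longrightarrow> w (fo w)"
  unfolding fo_def by (metis LeastI)

lemma fo_below: "i < fo w \<Longrightarrow> \<not> w i"
  unfolding fo_def using not_less_Least by blast

lemma fo_eq: "w N \<Longrightarrow> (\<forall>i<N. \<not> w i) \<Longrightarrow> fo w = N"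
  unfolding fo_def by (rule Least_equality) (auto simp: not_less[symmetric])

lemma enc_zero[simp]: "enc k (\<lambda>i. False) = (\<lambda>i. False)"
  by (simp add: enc_def)

lemma enc_nz_one: "\<exists>i. s i \<Longrightarrow> enc k s (prod_encode (k, fo s))"
  by (simp add: enc_def fo_one)

lemma enc_nz_below: "i < prod_encode (k, fo s) \<Longrightarrow> \<not> enc k s i"
  by (simp add: enc_def)

lemma fo_enc: "\<exists>i. s i \<Longrightarrow> fo (enc k s) = prod_encode (k, fo s)"
  by (rule fo_eq) (auto simp: enc_nz_one enc_nz_below)

lemma enc_nz: "\<exists>i. s i \<Longrightarrow> \<exists>i. enc k s i"
  using enc_nz_one by blast

lemma lev_enc: "\<exists>i. s i \<Longrightarrow> lev (enc k s) = k"
  by (simp add: lev_def fo_enc)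

lemma dpos_enc: "\<exists>i. s i \<Longrightarrow> dpos (enc k s) = fo s"
  by (simp add: dpos_def fo_enc)

lemma dec_enc: "\<exists>i. s i \<Longrightarrow> dec (enc k s) = s"
proof
  fix i assume nz: "\<exists>i. s i"
  define P where "P = prod_encode (k, fo s)"
  have fP: "fo s \<le> P" unfolding P_def using le_prod_encode_2 by blast
  have "dec (enc k s) i = (fo s \<le> i \<and> enc k s (i - fo s + P))"
    by (simp add: dec_def dpos_enc[OF nz] fo_enc[OF nz] P_def)
  also have "\<dots> = (fo s \<le> i \<and> s i)"
    using fP by (auto simp: enc_def nz P_def[symmetric])
  also have "\<dots> = s i" using fo_below[of i s] le_less_linear by blast
  finally show "dec (enc k s) i = s i" .
qed

lemma enc_dec: "\<exists>i. w i \<Longrightarrow> enc (lev w) (dec w) = w"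
proof
  fix i assume nz: "\<exists>i. w i"
  have d1: "dec w (dpos w)" by (simp add: dec_def fo_one[OF nz])
  have d2: "\<forall>i<dpos w. \<not> dec w i" by (simp add: dec_def)
  have fod: "fo (dec w) = dpos w" using fo_eq[OF d1 d2] .
  have pe: "prod_encode (lev w, dpos w) = fo w" by (simp add: lev_def dpos_def)
  have dn: "\<exists>i. dec w i" using d1 by blast
  have "enc (lev w) (dec w) i = (fo w \<le> i \<and> dec w (i - fo w + dpos w))"
    by (simp add: enc_def dn fod pe)
  also have "\<dots> = (fo w \<le> i \<and> w i)" by (auto simp: dec_def)
  also have "\<dots> = w i" using fo_below[of i w] le_less_linear by blast
  finally show "enc (lev w) (dec w) i = w i" .
qed

lemma w_rep: "\<exists>k s. w = enc k s"
proof (cases "\<exists>i. w i")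
  case True
  then show ?thesis using enc_dec[OF True, symmetric] by blast
next
  case False
  then have "w = enc 0 (\<lambda>i. False)" by auto
  then show ?thesis by blast
qed

lemma Gm_zero[simp]: "Gm (\<lambda>i. False) = (\<lambda>i. False)"
  by (simp add: Gm_def)

lemma sh_zero[simp]: "sh n (\<lambda>i. False) = (\<lambda>i. False)"
  by (simp add: sh_def)

lemma Gm_enc: "Gm (enc k s) = enc k (sh 1 s)"
proof (cases "\<exists>i. s i")
  case True
  have "Gm (enc k s) = enc (lev (enc k s)) (sh 1 (dec (enc k s)))"
    unfolding Gm_def using enc_nz[OF True] by simp
  then show ?thesis by (simp only: lev_enc[OF True] dec_enc[OF True])
next
  case False
  then have "s = (\<lambda>i. False)" by auto
  then show ?thesis by simp
qed

lemma sh_add: "sh 1 (sh n s) = sh (Suc n) s"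
  by (auto simp: sh_def)

lemma Gm_pow: "(Gm ^^ n) (enc k s) = enc k (sh n s)"
proof (induction n)
  case 0 then show ?case by (simp add: sh_def)
next
  case (Suc n)
  have "(Gm ^^ Suc n) (enc k s) = Gm (enc k (sh n s))" using Suc by simp
  also have "\<dots> = enc k (sh 1 (sh n s))" by (rule Gm_enc)
  also have "\<dots> = enc k (sh (Suc n) s)" by (simp only: sh_add)
  finally show ?case .
qed

lemma Gm_pow_zero: "(Gm ^^ n) (\<lambda>i. False) = (\<lambda>i. False)"
  by (induction n) auto

lemma enc_low: "enc k s i \<Longrightarrow> k \<le> i"
  using enc_nz_below[of i k s] le_prod_encode_1[of k "fo s"] by linarith

lemma enc_zero_below: "(\<forall>i<r. \<not> s i) \<Longrightarrow> enc k s i \<Longrightarrow> r \<le> i"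
proof (cases "\<exists>i. s i")
  case True
  assume z: "\<forall>i<r. \<not> s i" and e: "enc k s i"
  have "r \<le> fo s" using z fo_one[OF True] not_less by blast
  moreover have "fo s \<le> prod_encode (k, fo s)" by (rule le_prod_encode_2)
  moreover have "prod_encode (k, fo s) \<le> i" using e enc_nz_below not_less by blast
  ultimately show ?thesis by linarith
next
  case False
  assume "enc k s i"
  then show ?thesis using False by (simp add: enc_def)
qed

lemma enc_agree: "agree t t' r \<Longrightarrow> agree (enc k t) (enc k t') r"
proof (cases "\<exists>i<r. t i")
  case True
  assume ag: "agree t t' r"
  then obtain i0 where i0: "i0 < r" "t i0" using True by blast
  have nzt: "\<exists>i. t i" using i0 by blast
  have nzt': "\<exists>i. t' i" using i0 ag by (auto simp: agree_def)
  have ft: "fo t < r" using i0 fo_below[of i0 t] not_less by (metis le_less_trans)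
  have "fo t' = fo t"
  proof (rule fo_eq)
    show "t' (fo t)" using fo_one[OF nzt] ft ag by (auto simp: agree_def)
    show "\<forall>i<fo t. \<not> t' i" using fo_below[of _ t] ft ag by (auto simp: agree_def)
  qed
  then show ?thesis
    using ag ft le_prod_encode_2[of "fo t" k]
    unfolding agree_def enc_def by (auto simp: nzt nzt')
next
  case False
  assume ag: "agree t t' r"
  have z: "\<forall>i<r. \<not> t i" using False by blast
  have z': "\<forall>i<r. \<not> t' i" using False ag by (auto simp: agree_def)
  show ?thesis unfolding agree_def
    using enc_zero_below[OF z, of k] enc_zero_below[OF z', of k] by (meson not_le)
qed

lemma agree_sh1: "agree s s' (Suc n) \<Longrightarrow> agree (sh 1 s) (sh 1 s') n"
  by (simp add: agree_def sh_def)

lemma Gm_cont: "\<exists>m. \<forall>w'. agree w w' m \<longrightarrow> agree (Gm w) (Gm w') n"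
proof (cases "\<exists>i. w i")
  case True
  define N where "N = fo w"
  have wN: "w N" using fo_one[OF True] N_def by simp
  have bN: "\<forall>i<N. \<not> w i" using fo_below N_def by blast
  show ?thesis
  proof (intro exI allI impI)
    fix w' assume ag: "agree w w' (N + n + 2)"
    have w'N: "w' N" using ag wN by (auto simp: agree_def)
    have nz': "\<exists>i. w' i" using w'N by blast
    have fo': "fo w' = N" by (rule fo_eq[of w' N, OF w'N]) (use ag bN in \<open>auto simp: agree_def\<close>)
    have lv: "lev w' = lev w" "dpos w' = dpos w" by (simp_all add: lev_def dpos_def fo' N_def)
    have "agree (dec w) (dec w') (Suc n)"
      using ag unfolding agree_def dec_def lv fo' N_def[symmetric] by auto
    then have "agree (sh 1 (dec w)) (sh 1 (dec w')) n" by (rule agree_sh1)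
    then show "agree (Gm w) (Gm w') n"
      unfolding Gm_def using True nz' lv by (simp add: enc_agree)
  qed
next
  case False
  then have wz: "w = (\<lambda>i. False)" by auto
  define m where "m = Suc (Max (prod_encode ` ({..<n} \<times> {..n})))"
  show ?thesis
  proof (intro exI allI impI)
    fix w' assume ag: "agree w w' m"
    show "agree (Gm w) (Gm w') n"
    proof (cases "\<exists>i. w' i")
      case False
      then have "w' = (\<lambda>i. False)" by auto
      then show ?thesis using wz by (simp add: agree_def)
    next
      case True
      have "m \<le> fo w'"
      proof (rule ccontr)
        assume "\<not> m \<le> fo w'"
        then have "w (fo w') = w' (fo w')" using ag by (simp add: agree_def)
        then show False using fo_one[OF True] wz by simp
      qed
      define k where "k = lev w'"
      define j where "j = dpos w'"
      have pe: "prod_encode (k, j) = fo w'" by (simp add: k_def j_def lev_def dpos_def)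
      have "\<not> (k < n \<and> j \<le> n)"
      proof
        assume "k < n \<and> j \<le> n"
        then have "prod_encode (k, j) \<in> prod_encode ` ({..<n} \<times> {..n})" by auto
        then have "prod_encode (k, j) \<le> Max (prod_encode ` ({..<n} \<times> {..n}))" by simp
        then show False using pe \<open>m \<le> fo w'\<close> m_def by simp
      qed
      then have "n \<le> k \<or> n < j" by auto
      moreover have gm: "Gm w' = enc k (sh 1 (dec w'))" by (simp add: Gm_def True k_def)
      moreover have "\<forall>i<j - 1. \<not> sh 1 (dec w') i" by (auto simp: sh_def dec_def j_def)
      ultimately have "\<forall>i<n. \<not> Gm w' i"
      proof -
        assume c: "n \<le> k \<or> n < j" and g: "Gm w' = enc k (sh 1 (dec w'))"
          and z: "\<forall>i<j - 1. \<not> sh 1 (dec w') i"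
        show ?thesis
        proof (intro allI impI)
          fix i assume i: "i < n"
          show "\<not> Gm w' i"
          proof
            assume "Gm w' i"
            then have e: "enc k (sh 1 (dec w')) i" using g by simp
            from c show False
            proof
              assume "n \<le> k" then show False using enc_low[OF e] i by linarith
            next
              assume "n < j" then show False using enc_zero_below[OF z e] i by linarith
            qed
          qed
        qed
      qed
      then show ?thesis using wz by (simp add: agree_def)
    qed
  qed
qed

lemma Gm_zero_tail:
  assumes z: "\<forall>i\<ge>L. \<not> w i" and n: "2 * L \<le> n"
  shows "(Gm ^^ n) w = (\<lambda>i. False)"
proof (cases "\<exists>i. w i")
  case False
  then have "w = (\<lambda>i. False)" by auto
  then show ?thesis by (simp add: Gm_pow_zero)
next
  case True
  have jN: "dpos w \<le> fo w" unfolding dpos_def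
    by (metis le_prod_encode_2 prod.collapse prod_decode_inverse)
  have "sh n (dec w) = (\<lambda>i. False)"
  proof
    fix i
    have "L \<le> i + n - dpos w + fo w" using jN n by linarith
    then show "sh n (dec w) i = False" using z by (simp add: sh_def dec_def)
  qed
  then show ?thesis using Gm_pow[of n "lev w" "dec w"] enc_dec[OF True] by simp
qed




definition psi :: "real \<Rightarrow> nat \<Rightarrow> bool" where "psi x = (SOME a. phi a = x)"

lemma phi_psi: "x \<in> cantor_set \<Longrightarrow> phi (psi x) = x"
proof -
  assume x: "x \<in> cantor_set"
  show ?thesis unfolding psi_def using someI_ex[OF phi_surj[OF x]] .
qed

lemma psi_phi: "psi (phi a) = a"
  using phi_psi[OF phi_cantor[of a]] phi_inj by blast

definition gmap :: "real \<Rightarrow> real" where "gmap x = phi (Gm (psi x))"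

lemma gmap_C: "gmap x \<in> cantor_set"
  by (simp add: gmap_def phi_cantor)

lemma gmap_img: "gmap ` cantor_set \<subseteq> cantor_set"
  using gmap_C by blast

lemma gmap_pow: "x \<in> cantor_set \<Longrightarrow> (gmap ^^ n) x = phi ((Gm ^^ n) (psi x))"
proof (induction n)
  case 0 then show ?case by (simp add: phi_psi)
next
  case (Suc n) then show ?case by (simp add: gmap_def psi_phi)
qed

lemma pow3_pos: "0 < 1 / (3::real) ^ n" by simp

lemma small_e: "0 < (e::real) \<Longrightarrow> \<exists>n. 1 / 3 ^ n < e"
  using real_arch_pow_inv[of e "1/3"] by (auto simp: power_divide)

lemma agree_of_close:
  assumes "\<bar>phi a - phi b\<bar> < 1 / 3 ^ m"
  shows "agree a b m"
proof (rule ccontr)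
  assume "\<not> agree a b m"
  then obtain i where i: "i < m" "agree a b i" "a i \<noteq> b i" using first_diff by blast
  have "1 / (3::real) ^ Suc i \<le> \<bar>phi a - phi b\<bar>" using phi_agree_ge[OF i(2,3)] .
  moreover have "1 / (3::real) ^ m \<le> 1 / 3 ^ Suc i"
    using i(1) by (intro divide_left_mono power_increasing) auto
  ultimately show False using assms by linarith
qed

lemma gmap_cont: "continuous_on cantor_set gmap"
  unfolding continuous_on_iff
proof (intro ballI allI impI)
  fix x e assume x: "x \<in> cantor_set" and e: "(0::real) < e"
  obtain n where n: "1 / 3 ^ n < e" using small_e[OF e] by blast
  obtain m where m: "\<forall>w'. agree (psi x) w' m \<longrightarrow> agree (Gm (psi x)) (Gm w') n"
    using Gm_cont by blast
  show "\<exists>d>0. \<forall>x'\<in>cantor_set. dist x' x < d \<longrightarrow> dist (gmap x') (gmap x) < e"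
  proof (intro exI conjI ballI impI)
    show "0 < 1 / (3::real) ^ m" by simp
    fix x' assume x': "x' \<in> cantor_set" and d: "dist x' x < 1 / 3 ^ m"
    have "\<bar>phi (psi x) - phi (psi x')\<bar> < 1 / 3 ^ m"
      using d phi_psi[OF x] phi_psi[OF x'] by (simp add: dist_real_def abs_minus_commute)
    then have "agree (psi x) (psi x') m" by (rule agree_of_close)
    then have "agree (Gm (psi x)) (Gm (psi x')) n" using m by blast
    then have "\<bar>gmap x - gmap x'\<bar> \<le> 1 / 3 ^ n" unfolding gmap_def by (rule phi_agree_le)
    then show "dist (gmap x') (gmap x) < e" using n by (simp add: dist_real_def abs_minus_commute)
  qed
qed

lemma gmap_pow_cont: "continuous_on cantor_set (gmap ^^ n)"
proof (induction n)
  case 0 then show ?case by (simp add: continuous_on_id)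
next
  case (Suc n)
  have img: "(gmap ^^ n) ` cantor_set \<subseteq> cantor_set"
  proof (cases n)
    case 0 then show ?thesis by simp
  next
    case (Suc n') then show ?thesis using gmap_C by (simp add: image_subset_iff)
  qed
  have "continuous_on cantor_set (gmap \<circ> (gmap ^^ n))"
    by (rule continuous_on_compose[OF Suc]) (rule continuous_on_subset[OF gmap_cont img])
  then show ?case by simp
qed

lemma gmap_pow_C: "x \<in> cantor_set \<Longrightarrow> (gmap ^^ n) x \<in> cantor_set"
  by (simp add: gmap_pow phi_cantor)




definition CC :: "(real \<times> real) set" where "CC = cantor_set \<times> cantor_set"
definition Fd :: "nat \<Rightarrow> real \<times> real \<Rightarrow> real" where
  "Fd n p = dist ((gmap ^^ n) (fst p)) ((gmap ^^ n) (snd p))"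
definition Pint :: "nat \<Rightarrow> real set" where
  "Pint N = {x. 1 / 3 ^ Suc N < x \<and> x < 2 / 3 ^ N}"
definition th :: "nat \<Rightarrow> real" where
  "th N = 1 / 3 ^ Suc (prod_encode (fst (prod_decode N), 0))"
definition Aset :: "nat \<Rightarrow> (real \<times> real) set" where
  "Aset m = (\<Union>n\<in>{m..}. CC \<inter> Fd n -` {..<1 / real (Suc m)})"
definition Bset :: "nat \<Rightarrow> (real \<times> real) set" where
  "Bset m = (\<Union>N. \<Union>n\<in>{m..}. (CC \<inter> Fd n -` {th N<..}) \<inter> (CC \<inter> fst -` Pint N))"
definition Gfam :: "nat \<Rightarrow> (real \<times> real) set" where
  "Gfam k = (if even k then Aset (k div 2) else Bset (k div 2))"

lemma Fd_cont: "continuous_on CC (Fd n)"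
proof -
  have f: "continuous_on CC (\<lambda>p. (gmap ^^ n) (fst p))"
    by (rule continuous_on_compose2[OF gmap_pow_cont continuous_on_fst]) (auto simp: CC_def)
  have s: "continuous_on CC (\<lambda>p. (gmap ^^ n) (snd p))"
    by (rule continuous_on_compose2[OF gmap_pow_cont continuous_on_snd]) (auto simp: CC_def)
  show ?thesis unfolding Fd_def by (rule continuous_on_dist[OF f s])
qed

lemma Aset_open: "openin (top_of_set CC) (Aset m)"
  unfolding Aset_def
  by (intro openin_Union) (auto intro!: continuous_openin_preimage_gen Fd_cont)

lemma Bset_open: "openin (top_of_set CC) (Bset m)"
proof -
  have P: "open (Pint N)" for N
  proof -
    have "Pint N = {1 / 3 ^ Suc N <..< 2 / 3 ^ N}" by (auto simp: Pint_def)
    then show ?thesis by simp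
  qed
  have o: "openin (top_of_set CC) ((CC \<inter> Fd n -` {th N<..}) \<inter> (CC \<inter> fst -` Pint N))" for n N
    by (rule openin_Int[OF continuous_openin_preimage_gen continuous_openin_preimage_gen])
       (auto intro: Fd_cont continuous_on_fst P)
  have o2: "openin (top_of_set CC) (\<Union>n\<in>{m..}. (CC \<inter> Fd n -` {th N<..}) \<inter> (CC \<inter> fst -` Pint N))" for N
    by (rule openin_Union) (use o in blast)
  show ?thesis unfolding Bset_def by (rule openin_Union) (use o2 in blast)
qed

lemma Gfam_open: "openin (top_of_set CC) (Gfam k)"
  by (simp add: Gfam_def Aset_open Bset_open)

lemma dist_pair_le: "dist (a, b) (c, d) \<le> dist a c + dist (b::real) (d::real)"
  using sqrt_sum_squares_le_sum_abs[of "dist a c" "dist b d"] by (simp add: dist_Pair_Pair)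

definition trunc :: "nat \<Rightarrow> (nat \<Rightarrow> bool) \<Rightarrow> nat \<Rightarrow> bool" where
  "trunc L a = (\<lambda>i. i < L \<and> a i)"

lemma trunc_close: "x \<in> cantor_set \<Longrightarrow> \<bar>phi (trunc L (psi x)) - x\<bar> \<le> 1 / 3 ^ L"
proof -
  assume x: "x \<in> cantor_set"
  have "agree (trunc L (psi x)) (psi x) L" by (simp add: agree_def trunc_def)
  from phi_agree_le[OF this] show ?thesis using phi_psi[OF x] by simp
qed

lemma trunc_zero: "2 * L \<le> n \<Longrightarrow> (Gm ^^ n) (trunc L a) = (\<lambda>i. False)"
  by (rule Gm_zero_tail[of L]) (auto simp: trunc_def)

lemma Pint_iff:
  assumes x: "x \<in> cantor_set"
  shows "x \<in> Pint N \<longleftrightarrow> (\<exists>i. psi x i) \<and> fo (psi x) = N"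
proof
  assume "(\<exists>i. psi x i) \<and> fo (psi x) = N"
  then have nz: "\<exists>i. psi x i" and f: "fo (psi x) = N" by auto
  have "\<forall>i<N. \<not> psi x i" "psi x N" using fo_below fo_one[OF nz] f by auto
  from phi_first_one[OF this] phi_psi[OF x]
  have "2 / 3 ^ Suc N \<le> x" "x \<le> 1 / 3 ^ N" by auto
  moreover have "1 / (3::real) ^ Suc N < 2 / 3 ^ Suc N" "1 / (3::real) ^ N < 2 / 3 ^ N"
    by (intro divide_strict_right_mono; simp)+
  ultimately show "x \<in> Pint N" unfolding Pint_def by auto
next
  assume P: "x \<in> Pint N"
  show "(\<exists>i. psi x i) \<and> fo (psi x) = N"
  proof (cases "\<exists>i. psi x i")
    case False
    then have "psi x = (\<lambda>i. False)" by auto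
    then have "x = 0" using phi_psi[OF x] phi_zero by metis
    then show ?thesis using P by (simp add: Pint_def)
  next
    case True
    define N' where "N' = fo (psi x)"
    have "\<forall>i<N'. \<not> psi x i" "psi x N'" using fo_below fo_one[OF True] N'_def by auto
    from phi_first_one[OF this] phi_psi[OF x]
    have b: "2 / 3 ^ Suc N' \<le> x" "x \<le> 1 / 3 ^ N'" by auto
    have "N' = N"
    proof (rule ccontr)
      assume "N' \<noteq> N"
      then consider "N' < N" | "N < N'" by linarith
      then show False
      proof cases
        case 1
        then have "(3::real) ^ Suc N' \<le> 3 ^ N" by (intro power_increasing) auto
        then have "2 / (3::real) ^ N \<le> 2 / 3 ^ Suc N'" by (intro divide_left_mono) auto
        then show False using b P by (simp add: Pint_def)
      next
        case 2
        then have "(3::real) ^ Suc N \<le> 3 ^ N'" by (intro power_increasing) auto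
        then have "1 / (3::real) ^ N' \<le> 1 / 3 ^ Suc N" by (intro divide_left_mono) auto
        then show False using b P by (simp add: Pint_def)
      qed
    qed
    then show ?thesis using True N'_def by simp
  qed
qed




lemma gpow_phi: "(gmap ^^ n) (phi a) = phi ((Gm ^^ n) a)"
  using gmap_pow[OF phi_cantor[of a]] by (simp add: psi_phi)

lemma approx_pair:
  fixes x x' y y' e :: real
  assumes "\<bar>x' - x\<bar> \<le> 1 / 3 ^ L" "\<bar>y' - y\<bar> \<le> 1 / 3 ^ L" "1 / 3 ^ L < e / 2"
  shows "dist (x', y') (x, y) < e"
proof -
  have "dist (x', y') (x, y) \<le> dist x' x + dist y' y" using dist_pair_le[of x' y' x y] by simp
  then show ?thesis using assms by (simp add: dist_real_def)
qed

lemma A_dense: "CC \<subseteq> closure (Aset m)"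
proof
  fix p assume p: "p \<in> CC"
  obtain x y where xy: "p = (x, y)" "x \<in> cantor_set" "y \<in> cantor_set"
    using p by (auto simp: CC_def)
  show "p \<in> closure (Aset m)"
    unfolding closure_approachable
  proof (intro allI impI)
    fix e :: real assume e: "0 < e"
    obtain L where L: "1 / 3 ^ L < e / 2" using small_e[of "e/2"] e by auto
    define a' where "a' = trunc L (psi x)"
    define b' where "b' = trunc L (psi y)"
    define n0 where "n0 = m + 2 * L"
    have q: "(phi a', phi b') \<in> CC" by (simp add: CC_def phi_cantor)
    have "Fd n0 (phi a', phi b') = 0"
      unfolding Fd_def by (simp add: gpow_phi a'_def b'_def trunc_zero n0_def)
    then have "(phi a', phi b') \<in> CC \<inter> Fd n0 -` {..<1 / real (Suc m)}" using q by simp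
    moreover have "n0 \<in> {m..}" by (simp add: n0_def)
    ultimately have "(phi a', phi b') \<in> Aset m"
      unfolding Aset_def by blast
    moreover have "dist (phi a', phi b') p < e"
      unfolding xy(1) by (rule approx_pair[OF _ _ L])
        (simp_all add: a'_def b'_def trunc_close xy)
    ultimately show "\<exists>q\<in>Aset m. dist q p < e" by blast
  qed
qed

lemma jN: "dpos w \<le> fo w"
  unfolding dpos_def by (metis le_prod_encode_2 prod.collapse prod_decode_inverse)

lemma enc_e0_phi: "2 / 3 ^ Suc (prod_encode (k, 0)) \<le> phi (enc k (\<lambda>i. i = 0))"
proof -
  have nz: "\<exists>i. (\<lambda>i::nat. i = 0) i" by blast
  have f0: "fo (\<lambda>i::nat. i = 0) = 0" by (rule fo_eq) auto
  show ?thesis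
    using phi_first_one(1)[of "prod_encode (k, 0)" "enc k (\<lambda>i. i = 0)"]
      enc_nz_one[OF nz, of k] enc_nz_below[of _ k "\<lambda>i. i = 0"] f0 by simp
qed

lemma B_dense: "CC \<subseteq> closure (Bset m)"
proof
  fix p assume p: "p \<in> CC"
  obtain x y where xy: "p = (x, y)" "x \<in> cantor_set" "y \<in> cantor_set"
    using p by (auto simp: CC_def)
  show "p \<in> closure (Bset m)"
    unfolding closure_approachable
  proof (intro allI impI)
    fix e :: real assume e: "0 < e"
    obtain L where L: "1 / 3 ^ L < e / 2" using small_e[of "e/2"] e by auto
    define R where "R = m + 2 * L"
    define a' where "a' = (\<lambda>i. if i < L then psi x i else (i = L \<or> i = L + 1 + R))"
    define b' where "b' = trunc L (psi y)"
    have q: "(phi a', phi b') \<in> CC" by (simp add: CC_def phi_cantor)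
    have nz: "\<exists>i. a' i" by (rule exI[of _ L]) (simp add: a'_def)
    define N where "N = fo a'"
    have NL: "N \<le> L" unfolding N_def fo_def by (rule Least_le) (simp add: a'_def)
    have inP: "phi a' \<in> Pint N"
      using Pint_iff[OF phi_cantor[of a']] nz by (simp add: psi_phi N_def)
    define k where "k = lev a'"
    define j where "j = dpos a'"
    define s where "s = dec a'"
    have jN': "j \<le> N" unfolding j_def N_def by (rule jN)
    define n0 where "n0 = L + 1 + R - N + j"
    have shs: "sh n0 s = (\<lambda>i. i = 0)"
    proof
      fix i
      have e1: "i + n0 - j + N = i + L + 1 + R" unfolding n0_def using NL by linarith
      have e2: "sh n0 s i = (j \<le> i + n0 \<and> a' (i + n0 - j + N))"
        by (simp add: sh_def s_def dec_def j_def N_def)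
      have "j \<le> i + n0" unfolding n0_def using NL by linarith
      then have e3: "(j \<le> i + n0 \<and> a' (i + n0 - j + N)) = a' (i + L + 1 + R)" using e1 by simp
      have e4: "a' (i + L + 1 + R) = (i = 0)" by (simp add: a'_def)
      show "sh n0 s i = (i = 0)" using e2 e3 e4 by simp
    qed
    have aks: "a' = enc k s" unfolding k_def s_def using enc_dec[OF nz] by simp
    have "(Gm ^^ n0) a' = enc k (sh n0 s)" unfolding aks by (rule Gm_pow)
    then have "(Gm ^^ n0) a' = enc k (\<lambda>i. i = 0)" by (simp only: shs)
    then have v1: "2 / 3 ^ Suc (prod_encode (k, 0)) \<le> (gmap ^^ n0) (phi a')"
      using enc_e0_phi by (simp add: gpow_phi)
    have n0b: "2 * L \<le> n0" "m \<le> n0" unfolding n0_def R_def using NL by linarith+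
    have v2: "(gmap ^^ n0) (phi b') = 0"
      by (simp add: gpow_phi b'_def trunc_zero[OF n0b(1)] phi_zero)
    have thN: "th N = 1 / 3 ^ Suc (prod_encode (k, 0))" by (simp add: th_def k_def lev_def N_def)
    have "1 / (3::real) ^ Suc (prod_encode (k, 0)) < 2 / 3 ^ Suc (prod_encode (k, 0))"
      by (intro divide_strict_right_mono) auto
    then have "th N < Fd n0 (phi a', phi b')"
      unfolding Fd_def using v1 v2 thN by (simp add: dist_real_def)
    then have "(phi a', phi b') \<in> (CC \<inter> Fd n0 -` {th N<..}) \<inter> (CC \<inter> fst -` Pint N)"
      using q inP by simp
    then have "(phi a', phi b') \<in> (\<Union>n\<in>{m..}. (CC \<inter> Fd n -` {th N<..}) \<inter> (CC \<inter> fst -` Pint N))"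
      using n0b(2) by blast
    then have "(phi a', phi b') \<in> Bset m"
      unfolding Bset_def by blast
    moreover have "dist (phi a', phi b') p < e"
    proof -
      have "agree a' (psi x) L" by (simp add: agree_def a'_def)
      from phi_agree_le[OF this] have "\<bar>phi a' - x\<bar> \<le> 1 / 3 ^ L" using phi_psi[OF xy(2)] by simp
      then show ?thesis unfolding xy(1)
        by (intro approx_pair[OF _ _ L]) (simp_all add: b'_def trunc_close xy)
    qed
    ultimately show "\<exists>q\<in>Bset m. dist q p < e" by blast
  qed
qed

lemma Gfam_dense: "CC \<subseteq> closure (Gfam k)"
  by (simp add: Gfam_def A_dense B_dense)

lemma Gfam_inter:
  assumes p: "p \<in> CC" "\<forall>k. p \<in> Gfam k"
  shows "\<forall>m. \<exists>n\<ge>m. Fd n p < 1 / real (Suc m)"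
    and "\<exists>\<theta>>0. \<forall>m. \<exists>n\<ge>m. \<theta> < Fd n p"
proof -
  show "\<forall>m. \<exists>n\<ge>m. Fd n p < 1 / real (Suc m)"
  proof
    fix m
    have "p \<in> Gfam (2 * m)" using p by blast
    then show "\<exists>n\<ge>m. Fd n p < 1 / real (Suc m)" by (auto simp: Gfam_def Aset_def)
  qed
  have x: "fst p \<in> cantor_set" using p by (auto simp: CC_def)
  define \<theta> where "\<theta> = th (fo (psi (fst p)))"
  have "\<forall>m. \<exists>n\<ge>m. \<theta> < Fd n p"
  proof
    fix m
    have "p \<in> Gfam (2 * m + 1)" using p by blast
    then have "p \<in> Bset m" by (simp add: Gfam_def)
    then obtain N n where "n \<ge> m" "th N < Fd n p" "fst p \<in> Pint N" unfolding Bset_def by blast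
    moreover have "N = fo (psi (fst p))" using Pint_iff[OF x] \<open>fst p \<in> Pint N\<close> by simp
    ultimately show "\<exists>n\<ge>m. \<theta> < Fd n p" using \<theta>_def by blast
  qed
  moreover have "0 < \<theta>" by (simp add: \<theta>_def th_def)
  ultimately show "\<exists>\<theta>>0. \<forall>m. \<exists>n\<ge>m. \<theta> < Fd n p" by blast
qed

lemma U_bound:
  assumes a: "a \<in> cantor_set" "a \<in> Pint (prod_encode (k, 0))"
  shows "0 \<le> (gmap ^^ n) a \<and> (gmap ^^ n) a \<le> 1 / 3 ^ k"
proof -
  have nz: "\<exists>i. psi a i" and f: "fo (psi a) = prod_encode (k, 0)"
    using Pint_iff[OF a(1)] a(2) by auto
  have lv: "lev (psi a) = k" by (simp add: lev_def f)
  have "(Gm ^^ n) (psi a) = enc k (sh n (dec (psi a)))"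
    using Gm_pow[of n k "dec (psi a)"] enc_dec[OF nz] lv by simp
  moreover have "\<forall>i<k. \<not> enc k (sh n (dec (psi a))) i"
    using enc_low[of k "sh n (dec (psi a))"] not_le by blast
  ultimately have "agree ((Gm ^^ n) (psi a)) (\<lambda>i. False) k"
    by (simp add: agree_def)
  from phi_agree_le[OF this] have "\<bar>phi ((Gm ^^ n) (psi a))\<bar> \<le> 1 / 3 ^ k" by (simp add: phi_zero)
  then show ?thesis using gmap_pow[OF a(1)] phi_nonneg by simp
qed

lemma U_props:
  fixes k :: nat
  defines "U \<equiv> CC \<inter> (Pint (prod_encode (k, 0)) \<times> Pint (prod_encode (k, 0)))"
  shows "openin (top_of_set CC) U" "U \<noteq> {}"
    "\<And>a b n. (a, b) \<in> U \<Longrightarrow> dist ((gmap ^^ n) a) ((gmap ^^ n) b) \<le> 1 / 3 ^ k"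
proof -
  have P: "open (Pint N)" for N
  proof -
    have "Pint N = {1 / 3 ^ Suc N <..< 2 / 3 ^ N}" by (auto simp: Pint_def)
    then show ?thesis by simp
  qed
  show "openin (top_of_set CC) U" unfolding U_def
    by (rule openin_open_Int) (simp add: P open_Times)
  define w where "w = enc k (\<lambda>i. i = 0)"
  have nz: "\<exists>i. (\<lambda>i::nat. i = 0) i" by blast
  have f0: "fo (\<lambda>i::nat. i = 0) = 0" by (rule fo_eq) auto
  have "phi w \<in> Pint (prod_encode (k, 0))"
    using Pint_iff[OF phi_cantor[of w]] enc_nz[OF nz] fo_enc[OF nz] f0
    by (simp add: psi_phi w_def)
  then have "(phi w, phi w) \<in> U" by (simp add: U_def CC_def phi_cantor)
  then show "U \<noteq> {}" by blast
  fix a b n assume "(a, b) \<in> U"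
  then have "a \<in> cantor_set" "a \<in> Pint (prod_encode (k, 0))" "b \<in> cantor_set" "b \<in> Pint (prod_encode (k, 0))"
    by (auto simp: U_def CC_def)
  from U_bound[OF this(1,2), of n] U_bound[OF this(3,4), of n]
  show "dist ((gmap ^^ n) a) ((gmap ^^ n) b) \<le> 1 / 3 ^ k" by (simp add: dist_real_def abs_le_iff)
qed




lemma residual_mono: "residual_in S A \<Longrightarrow> A \<subseteq> B \<Longrightarrow> B \<subseteq> S \<Longrightarrow> residual_in S B"
  unfolding residual_in_def by blast

lemma residual_homeo:
  fixes S :: "'a::metric_space set" and T :: "'b::metric_space set"
  assumes hom: "homeomorphism S T k k'" and res: "residual_in S A"
  shows "residual_in T (k ` A)"
proof -
  have AS: "A \<subseteq> S" using res unfolding residual_in_def by (elim conjE)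
  have ex: "\<exists>G::nat \<Rightarrow> _. (\<forall>n. openin (top_of_set S) (G n) \<and> S \<subseteq> closure (G n)) \<and> S \<inter> (\<Inter>n. G n) \<subseteq> A"
    using res unfolding residual_in_def by auto
  then obtain G :: "nat \<Rightarrow> _" where "\<forall>n. openin (top_of_set S) (G n) \<and> S \<subseteq> closure (G n)"
    and GA: "S \<inter> (\<Inter>n. G n) \<subseteq> A" by (elim exE conjE)
  then have G: "\<And>n. openin (top_of_set S) (G n)" "\<And>n. S \<subseteq> closure (G n)" by auto
  have hd: "\<forall>x\<in>S. k' (k x) = x" "k ` S = T" "continuous_on S k" "\<forall>y\<in>T. k (k' y) = y" "k' ` T = S"
    using hom unfolding homeomorphism_def by auto
  have GS: "G n \<subseteq> S" for n using openin_imp_subset[OF G(1)] .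
  have o: "openin (top_of_set T) (k ` G n)" for n by (rule homeomorphism_imp_open_map[OF hom G(1)])
  have d: "T \<subseteq> closure (k ` G n)" for n
  proof
    fix t assume t: "t \<in> T"
    define s where "s = k' t"
    have s: "s \<in> S" "k s = t" using t hd(4,5) s_def by auto
    then have "s \<in> closure (G n)" using G(2) by blast
    then obtain \<sigma> where \<sigma>: "\<forall>i. \<sigma> i \<in> G n" "\<sigma> \<longlonglongrightarrow> s" using closure_sequential by blast
    have "(k \<circ> \<sigma>) \<longlonglongrightarrow> k s"
      using hd(3) s(1) \<sigma> GS unfolding continuous_on_sequentially by blast
    moreover have "\<forall>i. (k \<circ> \<sigma>) i \<in> k ` G n" using \<sigma>(1) by simp
    ultimately have "\<exists>x. (\<forall>i. x i \<in> k ` G n) \<and> x \<longlonglongrightarrow> t" using s(2) by blast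
    then show "t \<in> closure (k ` G n)" by (simp only: closure_sequential)
  qed
  have i: "T \<inter> (\<Inter>n. k ` G n) \<subseteq> k ` A"
  proof
    fix t assume t: "t \<in> T \<inter> (\<Inter>n. k ` G n)"
    define s where "s = k' t"
    have tT: "t \<in> T" using t by blast
    have s: "s \<in> S" "k s = t" using tT hd(4,5) s_def by auto
    have "s \<in> G n" for n
    proof -
      from t obtain u where u: "u \<in> G n" "t = k u" by blast
      then have "k' t = u" using hd(1) GS[of n] by blast
      then show ?thesis using u s_def by simp
    qed
    then have "s \<in> A" using GA s by blast
    then show "t \<in> k ` A" using s by blast
  qed
  have "k ` A \<subseteq> T" using AS hd by blast
  then show ?thesis unfolding residual_in_def
    by (intro conjI exI[of _ "\<lambda>n. k ` G n"]) (use o d i in auto)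
qed

lemma closed_CC: "closed CC"
  unfolding CC_def using compact_cantor compact_imp_closed closed_Times by blast

lemma Baire_meet:
  assumes res: "residual_in CC A" and U: "openin (top_of_set CC) U" "U \<noteq> {}"
  shows "A \<inter> U \<noteq> {}"
proof -
  have ex: "\<exists>G::nat \<Rightarrow> _. (\<forall>n. openin (top_of_set CC) (G n) \<and> CC \<subseteq> closure (G n)) \<and> CC \<inter> (\<Inter>n. G n) \<subseteq> A"
    using res unfolding residual_in_def by auto
  then obtain G :: "nat \<Rightarrow> _" where "\<forall>n. openin (top_of_set CC) (G n) \<and> CC \<subseteq> closure (G n)"
    and GA: "CC \<inter> (\<Inter>n. G n) \<subseteq> A" by (elim exE conjE)
  then have G: "\<And>n. openin (top_of_set CC) (G n)" "\<And>n. CC \<subseteq> closure (G n)" by auto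
  have B: "CC \<subseteq> closure (\<Inter>(range G))"
    by (rule Baire[OF closed_CC]) (use G in auto)
  obtain V where V: "open V" "U = CC \<inter> V" using U(1) openin_open by blast
  obtain u where u: "u \<in> U" using U(2) by blast
  have "u \<in> V \<inter> closure (\<Inter>(range G))" using u V B by blast
  then have "V \<inter> \<Inter>(range G) \<noteq> {}" using open_Int_closure_eq_empty[OF V(1)] by blast
  then obtain p where p: "p \<in> V" "\<forall>n. p \<in> G n" by blast
  have "p \<in> CC" using p(2) openin_imp_subset[OF G(1)] by blast
  then have "p \<in> A \<inter> U" using GA p V(2) by blast
  then show ?thesis by blast
qed

lemma residual_CC: "residual_in CC {p \<in> CC. \<forall>k. p \<in> Gfam k}"
  unfolding residual_in_def
  by (intro conjI exI[of _ Gfam]) (auto simp: Gfam_open Gfam_dense)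

lemma homeo_prod:
  assumes "homeomorphism S T f g"
  shows "homeomorphism (S \<times> S) (T \<times> T) (\<lambda>p. (f (fst p), f (snd p))) (\<lambda>p. (g (fst p), g (snd p)))"
proof -
  have hd: "\<forall>x\<in>S. g (f x) = x" "f ` S = T" "continuous_on S f" "\<forall>y\<in>T. f (g y) = y" "g ` T = S"
    "continuous_on T g"
    using assms unfolding homeomorphism_def by auto
  have e1: "(\<lambda>p. (f (fst p), f (snd p))) = map_prod f f" by (auto simp: fun_eq_iff)
  have e2: "(\<lambda>p. (g (fst p), g (snd p))) = map_prod g g" by (auto simp: fun_eq_iff)
  have c1: "continuous_on (S \<times> S) (\<lambda>p. (f (fst p), f (snd p)))"
    by (intro continuous_on_Pair continuous_on_compose2[OF hd(3) continuous_on_fst]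
        continuous_on_compose2[OF hd(3) continuous_on_snd]) auto
  have c2: "continuous_on (T \<times> T) (\<lambda>p. (g (fst p), g (snd p)))"
    by (intro continuous_on_Pair continuous_on_compose2[OF hd(6) continuous_on_fst]
        continuous_on_compose2[OF hd(6) continuous_on_snd]) auto
  show ?thesis unfolding homeomorphism_def
    using c1 c2 hd map_prod_surj_on[OF hd(2) hd(2)] map_prod_surj_on[OF hd(5) hd(5)]
    unfolding e1 e2 by auto
qed

lemma liminf_zero:
  fixes u :: "nat \<Rightarrow> real"
  assumes nn: "\<And>n. 0 \<le> u n" and sm: "\<And>e m. 0 < e \<Longrightarrow> \<exists>n\<ge>m. u n < e"
  shows "liminf (\<lambda>n. ereal (u n)) = 0"
proof (rule antisym)
  show "0 \<le> liminf (\<lambda>n. ereal (u n))"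
    by (rule Liminf_bounded) (simp add: nn)
  show "liminf (\<lambda>n. ereal (u n)) \<le> 0"
  proof (rule ccontr)
    assume "\<not> liminf (\<lambda>n. ereal (u n)) \<le> 0"
    then have "0 < liminf (\<lambda>n. ereal (u n))" by simp
    then obtain z where z: "0 < ereal z" "ereal z < liminf (\<lambda>n. ereal (u n))"
      using ereal_dense2 by blast
    have "\<forall>\<^sub>F n in sequentially. ereal z < ereal (u n)"
      using le_Liminf_iff[where C="liminf (\<lambda>n. ereal (u n))" and F=sequentially and X="\<lambda>n. ereal (u n)"] z(2) by blast
    then obtain M where M: "\<And>n. n \<ge> M \<Longrightarrow> z < u n" unfolding eventually_sequentially by auto
    obtain n where "n \<ge> M" "u n < z" using sm[of z M] z(1) by auto
    with M show False by fastforce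
  qed
qed

lemma limsup_pos:
  fixes u :: "nat \<Rightarrow> real"
  assumes d: "0 < \<delta>" and fr: "\<And>m. \<exists>n\<ge>m. \<delta> \<le> u n"
  shows "0 < limsup (\<lambda>n. ereal (u n))"
proof -
  have "ereal \<delta> \<le> limsup (\<lambda>n. ereal (u n))"
  proof (rule ccontr)
    assume "\<not> ereal \<delta> \<le> limsup (\<lambda>n. ereal (u n))"
    then have lt: "limsup (\<lambda>n. ereal (u n)) < ereal \<delta>" by simp
    have "\<forall>\<^sub>F n in sequentially. ereal \<delta> > ereal (u n)"
      using Limsup_le_iff[where C="limsup (\<lambda>n. ereal (u n))" and F=sequentially and X="\<lambda>n. ereal (u n)"] lt by blast
    then obtain M where M: "\<And>n. n \<ge> M \<Longrightarrow> u n < \<delta>" unfolding eventually_sequentially by auto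
    obtain n where "n \<ge> M" "\<delta> \<le> u n" using fr[of M] by auto
    with M show False by fastforce
  qed
  then show ?thesis using d by (meson ereal_less(2) less_le_trans)
qed

lemma limsup_le:
  fixes u :: "nat \<Rightarrow> real"
  assumes "\<And>n. u n \<le> c"
  shows "limsup (\<lambda>n. ereal (u n)) \<le> ereal c"
  by (rule Limsup_bounded) (simp add: assms)




theorem proposition37:
  fixes X :: "'a::metric_space set"
  assumes "X homeomorphic cantor_set"
  shows "\<exists>f. continuous_on X f \<and> f ` X \<subseteq> X \<and> generically_chaotic X f \<and>
             (\<forall>\<epsilon>>0. \<not> generically_eps_chaotic X f \<epsilon>)"
proof -
  obtain h hinv where hom: "homeomorphism X cantor_set h hinv"
    using assms unfolding homeomorphic_def by blast
  have hd: "\<forall>x\<in>X. hinv (h x) = x" "h ` X = cantor_set" "continuous_on X h"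
    "\<forall>y\<in>cantor_set. h (hinv y) = y" "hinv ` cantor_set = X" "continuous_on cantor_set hinv"
    using hom unfolding homeomorphism_def by auto
  define f where "f = (\<lambda>x. hinv (gmap (h x)))"
  have hC: "x \<in> X \<Longrightarrow> h x \<in> cantor_set" for x using hd(2) by blast
  have hinvX: "y \<in> cantor_set \<Longrightarrow> hinv y \<in> X" for y using hd(5) by blast
  have fpow: "x \<in> X \<Longrightarrow> (f ^^ n) x = hinv ((gmap ^^ n) (h x))" for x n
  proof (induction n)
    case 0 then show ?case using hd(1) by simp
  next
    case (Suc n)
    have "(f ^^ Suc n) x = f (hinv ((gmap ^^ n) (h x)))" using Suc by simp
    also have "\<dots> = hinv (gmap ((gmap ^^ n) (h x)))"
      unfolding f_def using hd(4) gmap_pow_C[OF hC[OF Suc.prems]] by simp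
    finally show ?case by simp
  qed
  have c1: "continuous_on X (gmap \<circ> h)"
    by (rule continuous_on_compose[OF hd(3)]) (simp add: hd(2) gmap_cont)
  have "continuous_on X (hinv \<circ> (gmap \<circ> h))"
    by (rule continuous_on_compose[OF c1], rule continuous_on_subset[OF hd(6)])
      (use gmap_C in auto)
  then have cont: "continuous_on X f" by (simp add: f_def comp_def)
  have img: "f ` X \<subseteq> X" unfolding f_def using hinvX gmap_C by blast
  have compX: "compact X" using homeomorphic_compactness[OF assms] compact_cantor by simp
  have uh: "uniformly_continuous_on X h" by (rule compact_uniformly_continuous[OF hd(3) compX])
  have uhinv: "uniformly_continuous_on cantor_set hinv"
    by (rule compact_uniformly_continuous[OF hd(6) compact_cantor])
  have orb: "x \<in> X \<Longrightarrow> y \<in> X \<Longrightarrow> orbit_dist f x y =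
      (\<lambda>n. ereal (dist (hinv ((gmap ^^ n) (h x))) (hinv ((gmap ^^ n) (h y)))))" for x y
    by (simp add: orbit_dist_def fpow)

  define HH where "HH = (\<lambda>p::real \<times> real. (hinv (fst p), hinv (snd p)))"
  define H2 where "H2 = (\<lambda>p::'a \<times> 'a. (h (fst p), h (snd p)))"
  have hom2: "homeomorphism CC (X \<times> X) HH H2"
    unfolding CC_def HH_def H2_def by (rule homeo_prod[OF homeomorphism_symD[OF hom]])
  have hom3: "homeomorphism (X \<times> X) CC H2 HH"
    unfolding CC_def HH_def H2_def by (rule homeo_prod[OF hom])

  have chaotic: "generically_chaotic X f"
  proof -
    define R where "R = {p \<in> CC. \<forall>k. p \<in> Gfam k}"
    have r1: "residual_in (X \<times> X) (HH ` R)"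
      unfolding R_def by (rule residual_homeo[OF hom2 residual_CC])
    have sub: "HH ` R \<subseteq> {(x, y) \<in> X \<times> X. li_yorke_pair f x y}"
    proof
      fix q assume "q \<in> HH ` R"
      then obtain p where p: "p \<in> R" "q = HH p" by blast
      have pC: "p \<in> CC" "\<forall>k. p \<in> Gfam k" using p(1) R_def by auto
      define a where "a = fst p"
      define b where "b = snd p"
      have aC: "a \<in> cantor_set" and bC: "b \<in> cantor_set" using pC(1) a_def b_def by (auto simp: CC_def)
      define x where "x = hinv a"
      define y where "y = hinv b"
      have xX: "x \<in> X" and yX: "y \<in> X" using hinvX aC bC x_def y_def by auto
      have hx: "h x = a" and hy: "h y = b" using hd(4) aC bC x_def y_def by auto
      define u where "u n = dist (hinv ((gmap ^^ n) a)) (hinv ((gmap ^^ n) b))" for n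
      have od: "orbit_dist f x y = (\<lambda>n. ereal (u n))" using orb[OF xX yX] hx hy u_def by simp
      have Fdp: "Fd n p = dist ((gmap ^^ n) a) ((gmap ^^ n) b)" for n by (simp add: Fd_def a_def b_def)
      have li: "liminf (\<lambda>n. ereal (u n)) = 0"
      proof (rule liminf_zero)
        show "0 \<le> u n" for n by (simp add: u_def)
        fix e :: real and m :: nat assume e: "0 < e"
        obtain \<delta> where d: "\<delta> > 0" "\<forall>z\<in>cantor_set. \<forall>z'\<in>cantor_set. dist z' z < \<delta> \<longrightarrow> dist (hinv z') (hinv z) < e"
          using uhinv e unfolding uniformly_continuous_on_def by blast
        obtain M :: nat where M: "M > 0" "inverse (real M) < \<delta>" using ex_inverse_of_nat_less[OF d(1)] by blast
        obtain n where n: "n \<ge> m + M" "Fd n p < 1 / real (Suc (m + M))"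
          using Gfam_inter(1)[OF pC] by blast
        have "1 / real (Suc (m + M)) \<le> inverse (real M)"
          using M(1) by (simp add: divide_simps)
        then have "dist ((gmap ^^ n) a) ((gmap ^^ n) b) < \<delta>" using n(2) M(2) Fdp[of n] by linarith
        then have "u n < e" unfolding u_def using d(2) gmap_pow_C[OF aC] gmap_pow_C[OF bC] by blast
        then show "\<exists>n\<ge>m. u n < e" using n(1) by (intro exI[of _ n]) auto
      qed
      obtain \<theta> where th: "\<theta> > 0" "\<forall>m. \<exists>n\<ge>m. \<theta> < Fd n p" using Gfam_inter(2)[OF pC] by blast
      obtain \<delta> where d: "\<delta> > 0" "\<forall>z\<in>X. \<forall>z'\<in>X. dist z' z < \<delta> \<longrightarrow> dist (h z') (h z) < \<theta>"
        using uh th(1) unfolding uniformly_continuous_on_def by blast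
      have ls: "0 < limsup (\<lambda>n. ereal (u n))"
      proof (rule limsup_pos[OF d(1)])
        fix m
        obtain n where n: "n \<ge> m" "\<theta> < Fd n p" using th(2) by blast
        have "\<delta> \<le> u n"
        proof (rule ccontr)
          assume "\<not> \<delta> \<le> u n"
          then have "dist (hinv ((gmap ^^ n) a)) (hinv ((gmap ^^ n) b)) < \<delta>" by (simp add: u_def)
          then have "dist (h (hinv ((gmap ^^ n) a))) (h (hinv ((gmap ^^ n) b))) < \<theta>"
            using d(2) hinvX gmap_pow_C[OF aC] gmap_pow_C[OF bC] by blast
          then have "Fd n p < \<theta>" using hd(4) gmap_pow_C[OF aC] gmap_pow_C[OF bC] Fdp by simp
          then show False using n(2) by simp
        qed
        then show "\<exists>n\<ge>m. \<delta> \<le> u n" using n(1) by blast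
      qed
      have "li_yorke_pair f x y" unfolding li_yorke_pair_def od using li ls by simp
      moreover have "q = (x, y)" using p(2) by (simp add: HH_def x_def y_def a_def b_def)
      ultimately show "q \<in> {(x, y) \<in> X \<times> X. li_yorke_pair f x y}" using xX yX by simp
    qed
    show ?thesis unfolding generically_chaotic_def
      by (rule residual_mono[OF r1 sub]) blast
  qed

  have noteps: "\<not> generically_eps_chaotic X f \<epsilon>" if ep: "\<epsilon> > 0" for \<epsilon>
  proof
    assume "generically_eps_chaotic X f \<epsilon>"
    then have r: "residual_in (X \<times> X) {(x, y) \<in> X \<times> X. eps_scrambled_pair f \<epsilon> x y}"
      unfolding generically_eps_chaotic_def .
    have r2: "residual_in CC (H2 ` {(x, y) \<in> X \<times> X. eps_scrambled_pair f \<epsilon> x y})"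
      by (rule residual_homeo[OF hom3 r])
    obtain \<delta> where d: "\<delta> > 0" "\<forall>z\<in>cantor_set. \<forall>z'\<in>cantor_set. dist z' z < \<delta> \<longrightarrow> dist (hinv z') (hinv z) < \<epsilon> / 2"
      using uhinv ep unfolding uniformly_continuous_on_def by (meson half_gt_zero)
    obtain k where k: "1 / 3 ^ k < \<delta>" using small_e[OF d(1)] by blast
    define U where "U = CC \<inter> (Pint (prod_encode (k, 0)) \<times> Pint (prod_encode (k, 0)))"
    have Uo: "openin (top_of_set CC) U" and Une: "U \<noteq> {}"
      and Ub: "\<And>a b n. (a, b) \<in> U \<Longrightarrow> dist ((gmap ^^ n) a) ((gmap ^^ n) b) \<le> 1 / 3 ^ k"
      using U_props(1)[where k=k] U_props(2)[where k=k] U_props(3)[where k=k] unfolding U_def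
      by blast+
    obtain q where q: "q \<in> H2 ` {(x, y) \<in> X \<times> X. eps_scrambled_pair f \<epsilon> x y}" "q \<in> U"
      using Baire_meet[OF r2 Uo Une] by blast
    then obtain x y where xy: "x \<in> X" "y \<in> X" "eps_scrambled_pair f \<epsilon> x y" "q = (h x, h y)"
      unfolding H2_def by auto
    have qU: "(h x, h y) \<in> U" using q(2) xy(4) by simp
    have bnd: "dist (hinv ((gmap ^^ n) (h x))) (hinv ((gmap ^^ n) (h y))) \<le> \<epsilon> / 2" for n
    proof -
      have "dist ((gmap ^^ n) (h x)) ((gmap ^^ n) (h y)) < \<delta>" using Ub[OF qU, of n] k by linarith
      then show ?thesis using d(2) gmap_pow_C[OF hC[OF xy(1)]] gmap_pow_C[OF hC[OF xy(2)]]
        by (meson less_imp_le)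
    qed
    have "limsup (orbit_dist f x y) \<le> ereal (\<epsilon> / 2)"
      unfolding orb[OF xy(1,2)] by (rule limsup_le) (rule bnd)
    moreover have "ereal \<epsilon> < limsup (orbit_dist f x y)"
      using xy(3) unfolding eps_scrambled_pair_def by blast
    ultimately have "ereal \<epsilon> < ereal (\<epsilon> / 2)" by (rule order.strict_trans2[rotated])
    then show False using ep by simp
  qed
  show ?thesis using cont img chaotic noteps by blast
qed


end
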